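(* Let $a>0$, $c>0$, and let $y$ be the solution of $\dot y(t)=\frac{c}{y(t)}-1$ with $y(0)=a$. Then for every $t\ge0$ with $t\ge a+c\log(a/c)$ we have $y(t)\le2c$. *)

theory Defs
  imports Complex_Main
begin

end

theory Submission
  imports Defs "HOL-Analysis.Analysis"
begin

theorem lemma15:
  fixes a c :: real and y :: "real \<Rightarrow> real"
  assumes "a > 0" and "c > 0"
    and "y 0 = a"
    and "\<And>t. t \<ge> 0 \<Longrightarrow> y t \<noteq> 0"
    and "\<And>t. t \<ge> 0 \<Longrightarrow> (y has_real_derivative (c / y t - 1)) (at t within {0..})"
  shows "\<forall>t. t \<ge> 0 \<and> t \<ge> a + c * ln (a / c) \<longrightarrow> y t \<le> 2 * c"
proof -
  have Dat: "(y has_real_derivative (c / y t - 1)) (at t)" if "t > 0" for t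
    using assms(5)[of t] that at_within_interior[of t "{0..}"] by simp
  have cont: "continuous_on {s..t} y" if "s \<ge> 0" for s t
  proof -
    have "continuous_on {0..} y"
      by (rule DERIV_continuous_on[where D="\<lambda>t. c / y t - 1"]) (use assms(5) in auto)
    then show ?thesis by (rule continuous_on_subset) (use that in auto)
  qed
  have stay: "y t \<le> M" if M: "M \<ge> c" and s: "s \<ge> 0" "s \<le> t" "y s \<le> M" for M s t
  proof (rule ccontr)
    assume nt: "\<not> y t \<le> M"
    define S where "S = {u \<in> {s..t}. y u \<le> M}"
    have cS: "compact S"
    proof -
      have "closed ({s..t} \<inter> y -` {..M})"
        by (rule continuous_closed_preimage[OF cont[OF s(1)]]) auto
      moreover have "S = {s..t} \<inter> y -` {..M}" unfolding S_def by auto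
      ultimately have "closed S" by simp
    moreover have "bounded S" by (rule bounded_subset[OF bounded_closed_interval]) (auto simp: S_def)
    ultimately show ?thesis by (simp add: compact_eq_bounded_closed)
    qed
    have neS: "S \<noteq> {}" using s unfolding S_def by auto
    define u0 where "u0 = Sup S"
    have u0S: "u0 \<in> S" unfolding u0_def using cS neS
      by (simp add: closed_contains_Sup compact_imp_bounded compact_imp_closed bounded_imp_bdd_above)
    have ub: "\<And>u. u \<in> S \<Longrightarrow> u \<le> u0" unfolding u0_def
      using cS by (meson bounded_imp_bdd_above cSup_upper compact_imp_bounded)
    have u0: "s \<le> u0" "u0 \<le> t" "y u0 \<le> M" using u0S unfolding S_def by auto
    have "u0 \<noteq> t" using u0 nt by auto
    with u0 have lt: "u0 < t" by auto
    obtain l z where z: "u0 < z" "z < t" "DERIV y z :> l" "y t - y u0 = (t - u0) * l"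
    proof -
      have dif: "y differentiable (at x)" if "u0 < x" "x < t" for x
      proof -
        have "x > 0" using that u0 s by linarith
        then show ?thesis using Dat[of x] unfolding real_differentiable_def by blast
      qed
      have cu: "continuous_on {u0..t} y" using cont u0 s by auto
      from MVT[OF lt cu dif] obtain l z where
        "u0 < z" "z < t" "DERIV y z :> l" "y t - y u0 = (t - u0) * l" by blast
      then show ?thesis by (rule that)
    qed
    have "y z > M"
    proof (rule ccontr)
      assume "\<not> y z > M"
      then have "z \<in> S" unfolding S_def using z u0 by auto
      then show False using ub z by fastforce
    qed
    have "l = c / y z - 1" using DERIV_unique[OF z(3) Dat] z u0 s by auto
    moreover have "c / y z < 1" using \<open>y z > M\<close> M assms(2) by simp
    ultimately have "l < 0" by simp
    then have "(t - u0) * l < 0" using lt by (simp add: mult_pos_neg)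
    then have "y t < y u0" using z(4) by linarith
    then show False using u0 nt by auto
  qed
  show ?thesis
  proof (intro allI impI)
    fix t assume t: "t \<ge> 0 \<and> t \<ge> a + c * ln (a / c)"
    show "y t \<le> 2 * c"
    proof (cases "\<exists>s. 0 \<le> s \<and> s \<le> t \<and> y s \<le> 2 * c")
      case True
      then show ?thesis using stay[of "2*c"] assms(2) by auto
    next
      case False
      then have big: "\<And>s. 0 \<le> s \<Longrightarrow> s \<le> t \<Longrightarrow> y s > 2 * c" by force
      have a2: "a > 2 * c" using big[of 0] t assms(3) by auto
      have "1 < a / c" using a2 assms(2) by (simp add: field_simps)
      then have "ln (a / c) > 0" by simp
      then have "c * ln (a / c) > 0" using assms(2) by simp
      then have tpos: "t > 0" using t assms(1) by linarith
      define V where "V u = y u + c * ln (y u - c) + u" for u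
      have Veq: "V = (\<lambda>u. y u + c * ln (y u - c) + u)" using V_def by auto
      have "V t = V 0"
      proof (rule DERIV_isconst_end[OF tpos])
        show "continuous_on {0..t} V"
        proof -
          have p: "\<And>x. x \<in> {0..t} \<Longrightarrow> y x - c > 0" using big assms(2) by force
          have c0: "continuous_on {0..t} y" using cont[of 0 t] by simp
          have nz: "\<forall>x\<in>{0..t}. y x - c \<noteq> 0" using p by force
          show ?thesis unfolding Veq
            by (intro continuous_on_add continuous_on_mult continuous_on_ln c0 nz
                continuous_on_const continuous_on_diff continuous_on_id)
        qed
      next
        fix x assume x: "0 < x" "x < t"
        have yx: "y x > 2 * c" using big x by auto
        have d1: "DERIV y x :> c / y x - 1" using Dat[OF x(1)] .
        have d2: "DERIV (\<lambda>u. y u - c) x :> c / y x - 1 - 0" by (rule DERIV_diff[OF d1 DERIV_const])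
        have pos: "0 < y x - c" using yx assms(2) by linarith
        have d3: "DERIV (\<lambda>u. ln (y u - c)) x :> 1 / (y x - c) * (c / y x - 1 - 0)"
          by (rule DERIV_chain2[OF DERIV_ln_divide[OF pos] d2])
        have d4: "DERIV (\<lambda>u. y u + c * ln (y u - c) + u) x :>
            (c / y x - 1) + c * (1 / (y x - c) * (c / y x - 1 - 0)) + 1"
          by (rule DERIV_add[OF DERIV_add[OF d1 DERIV_cmult[OF d3]] DERIV_ident])
        have "DERIV V x :> (c / y x - 1) + c * ((c / y x - 1) / (y x - c)) + 1"
          unfolding Veq using d4 by simp
        moreover have "(c / y x - 1) + c * ((c / y x - 1) / (y x - c)) + 1 = 0"
          using yx assms(2) by (simp add: field_simps)
        ultimately show "DERIV V x :> 0" by simp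
      qed
      then have eq: "y t + c * ln (y t - c) + t = a + c * ln (a - c)"
        unfolding V_def using assms(3) by simp
      have yt: "y t > 2 * c" using big t by auto
      have "ln (y t - c) > ln c" using yt assms(2) by simp
      have "ln (a - c) < ln a" using a2 assms(2) by simp
      have "ln (a / c) = ln a - ln c" using assms by (simp add: ln_div)
      have "t < a + c * (ln a - ln c)"
      proof -
        have "c * ln (y t - c) > c * ln c" using \<open>ln (y t - c) > ln c\<close> assms(2) by simp
        moreover have "c * ln (a - c) < c * ln a" using \<open>ln (a - c) < ln a\<close> assms(2) by simp
        ultimately show ?thesis using eq yt assms(2) by (simp add: algebra_simps, linarith)
      qed
      then show ?thesis using t \<open>ln (a / c) = ln a - ln c\<close> by simp
    qed
  qed
qed

end
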